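(* Let $X\sim\mathbb{P}$ on a sample space $\mathcal{X}$, let $G$ be a compact topological group acting on $\mathcal{X}$ with Haar probability measure $\mathbb{Q}$ (exact invariance $gX=_dX$ is not assumed), let $f:\mathcal{X}\to\mathbb{R}^k$ be such that $(x,g)\mapsto f(gx)$ is in $L^2(\mathbb{P}\times\mathbb{Q})$, let $\bar f(x)=\mathbb{E}_{g\sim\mathbb{Q}}f(gx)$, and let $\|f\|_\infty=\sup_x\|f(x)\|_2$ (possibly $\infty$). Then: 1. $\|\mathbb{E}_X\bar f(X)-\mathbb{E}_Xf(X)\|_2\le\mathbb{E}_g\mathcal{W}_1(f(gX),f(X))$. 2. $\mathrm{Cov}_X\bar f(X)=\mathrm{Cov}_{(X,g)}f(gX)-\mathbb{E}_X\mathrm{Cov}_gf(gX)$, and in the Loewner order $$-\mathbb{E}_X\mathrm{Cov}_gf(gX)-4\|f\|_\infty\mathbb{E}_g\mathcal{W}_1(f(gX),f(X))\,I\preceq\mathrm{Cov}_X\bar f(X)-\mathrm{Cov}_Xf(X)\preceq-\mathbb{E}_X\mathrm{Cov}_gf(gX)+4\|f\|_\infty\mathbb{E}_g\mathcal{W}_1(f(gX),f(X))\,I.$$ 3. For any real-valued convex $\varphi$ on $\mathbb{R}^k$ with (possibly infinite) Lipschitz constant $\|\varphi\|_{\mathrm{Lip}}$, letting $\overline{\varphi\circ f}(x)=\mathbb{E}_g\varphi(f(gx))$, $$\Big|\mathbb{E}_X\varphi(\bar f(X))-\mathbb{E}_X\varphi(f(X))-\big(\mathbb{E}_X\varphi(\bar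 f(X))-\mathbb{E}_X\overline{\varphi\circ f}(X)\big)\Big|\le\|\varphi\|_{\mathrm{Lip}}\,\mathbb{E}_g\mathcal{W}_1(f(gX),f(X)).$$
   Context: For a fixed $g$, $\mathcal{W}_1(f(gX),f(X))$ is the Wasserstein-1 distance between the laws of $f(gX)$ and $f(X)$ for $X\sim\mathbb{P}$: $\mathcal{W}_1(\mu,\nu)=\inf_{\pi\in\Pi(\mu,\nu)}\int\|x-y\|_2\,d\pi(x,y)$, the infimum over couplings with marginals $\mu,\nu$. $\mathbb{E}_g$ and $\mathrm{Cov}_g$ are over $g\sim\mathbb{Q}$; $\mathrm{Cov}_{(X,g)}$ is over $(X,g)\sim\mathbb{P}\times\mathbb{Q}$; $I$ is the identity matrix. Lipschitz constants are with respect to the Euclidean norm. *)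

theory Defs
  imports "HOL-Analysis.Analysis" "HOL-Probability.Probability"
begin

text \<open>Haar probability measure on a compact topological group (group written additively,
  not assumed commutative): a left-invariant Borel probability measure.\<close>
definition haar_prob :: "('g::topological_group_add) measure \<Rightarrow> bool" where
  "haar_prob Q \<longleftrightarrow> prob_space Q \<and> sets Q = sets borel \<and>
     (\<forall>g A. A \<in> sets borel \<longrightarrow> emeasure Q ((\<lambda>h. g + h) ` A) = emeasure Q A)"

definition couplings :: "('a::metric_space) measure \<Rightarrow> 'a measure \<Rightarrow> ('a \<times> 'a) measure set" where
  "couplings \<mu> \<nu> = {\<pi>. sets \<pi> = sets (borel \<Otimes>\<^sub>M borel) \<and>
      distr \<pi> borel fst = \<mu> \<and> distr \<pi> borel snd = \<nu>}"

definition wasserstein1 :: "('a::metric_space) measure \<Rightarrow> 'a measure \<Rightarrow> ennreal" where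
  "wasserstein1 \<mu> \<nu> = (INF \<pi> \<in> couplings \<mu> \<nu>. \<integral>\<^sup>+ z. ennreal (dist (fst z) (snd z)) \<partial>\<pi>)"

definition cov_mat :: "'a measure \<Rightarrow> ('a \<Rightarrow> real^'k) \<Rightarrow> real^'k^'k" where
  "cov_mat M Y = (\<chi> i j. \<integral>\<omega>. (Y \<omega> $ i - (\<integral>\<omega>'. Y \<omega>' $ i \<partial>M)) *
                              (Y \<omega> $ j - (\<integral>\<omega>'. Y \<omega>' $ j \<partial>M)) \<partial>M)"

definition loewner_le :: "real^'k^'k \<Rightarrow> real^'k^'k \<Rightarrow> bool" where
  "loewner_le A B \<longleftrightarrow> (\<forall>v. v \<bullet> ((B - A) *v v) \<ge> 0)"

definition orbit_avg :: "'g measure \<Rightarrow> ('g \<Rightarrow> 'x \<Rightarrow> 'x) \<Rightarrow> ('x \<Rightarrow> 'b::{banach,second_countable_topology}) \<Rightarrow> 'x \<Rightarrow> 'b" where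
  "orbit_avg Q act f x = (\<integral>g. f (act g x) \<partial>Q)"

definition sup_norm :: "('x \<Rightarrow> 'b::real_normed_vector) \<Rightarrow> ennreal" where
  "sup_norm f = (SUP x. ennreal (norm (f x)))"

definition lip_const :: "('a::metric_space \<Rightarrow> 'b::metric_space) \<Rightarrow> ennreal" where
  "lip_const \<phi> = (SUP (x, y) \<in> {(x, y). x \<noteq> y}. ennreal (dist (\<phi> x) (\<phi> y) / dist x y))"

end

theory Submission
  imports Defs
begin

lemma lip_meas:
  fixes h :: "'a::{metric_space,second_countable_topology} \<Rightarrow> 'b::{metric_space,second_countable_topology}"
  assumes "\<forall>a b. dist (h a) (h b) \<le> L * dist a b" "0 \<le> L"
  shows "h \<in> borel_measurable borel"
proof -
  have "lipschitz_on L UNIV h" using assms unfolding lipschitz_on_def by auto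
  then have "continuous_on UNIV h" by (rule lipschitz_on_continuous_on)
  then show ?thesis by (rule borel_measurable_continuous_onI)
qed

lemma coupling_bound:
  fixes h :: "real^'k \<Rightarrow> 'b::{banach,second_countable_topology}"
  assumes \<mu>: "prob_space \<mu>" and \<nu>: "prob_space \<nu>"
    and L0: "0 \<le> L" and Lh: "\<forall>a b. dist (h a) (h b) \<le> L * dist a b"
  shows "ennreal (dist (\<integral>x. h x \<partial>\<mu>) (\<integral>x. h x \<partial>\<nu>)) \<le> ennreal L * wasserstein1 \<mu> \<nu>"
proof (cases "L = 0")
  case True
  then have "h x = h 0" for x using Lh[rule_format, of x 0] by simp
  then have hc: "h = (\<lambda>_. h 0)" by auto
  have "(\<integral>x. h x \<partial>\<mu>) = h 0" "(\<integral>x. h x \<partial>\<nu>) = h 0"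
    using prob_space.prob_space[OF \<mu>] prob_space.prob_space[OF \<nu>] by (subst hc, simp)+
  then show ?thesis by simp
next
  case False
  then have Lp: "L > 0" using L0 by simp
  have hm[measurable]: "h \<in> borel_measurable borel" using lip_meas Lh L0 by blast
  define d where "d = dist (\<integral>x. h x \<partial>\<mu>) (\<integral>x. h x \<partial>\<nu>)"
  have per: "ennreal (d / L) \<le> (\<integral>\<^sup>+ z. ennreal (dist (fst z) (snd z)) \<partial>\<pi>)"
    if "\<pi> \<in> couplings \<mu> \<nu>" for \<pi>
  proof -
    have s\<pi>: "sets \<pi> = sets (borel \<Otimes>\<^sub>M borel)" and d1: "distr \<pi> borel fst = \<mu>"
      and d2: "distr \<pi> borel snd = \<nu>"
      using that unfolding couplings_def by auto
    have mf[measurable]: "fst \<in> measurable \<pi> (borel :: (real^'k) measure)"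
      by (subst measurable_cong_sets[OF s\<pi> refl]) (rule measurable_fst)
    have ms[measurable]: "snd \<in> measurable \<pi> (borel :: (real^'k) measure)"
      by (subst measurable_cong_sets[OF s\<pi> refl]) (rule measurable_snd)
    have dm[measurable]: "(\<lambda>z. dist (fst z) (snd z)) \<in> borel_measurable \<pi>" by measurable
    show ?thesis
    proof (cases "(\<integral>\<^sup>+ z. ennreal (dist (fst z) (snd z)) \<partial>\<pi>) = \<infinity>")
      case True then show ?thesis by simp
    next
      case False
      have di: "integrable \<pi> (\<lambda>z. dist (fst z) (snd z))"
        using False by (intro integrableI_nonneg) (auto simp: top.not_eq_extremum)
      have I1: "(\<integral>x. h x \<partial>\<mu>) = (\<integral>z. h (fst z) \<partial>\<pi>)"
        unfolding d1[symmetric] by (rule integral_distr[OF mf hm])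
      have I2: "(\<integral>x. h x \<partial>\<nu>) = (\<integral>z. h (snd z) \<partial>\<pi>)"
        unfolding d2[symmetric] by (rule integral_distr[OF ms hm])
      have bnd: "norm (h (fst z) - h (snd z)) \<le> norm (L * dist (fst z) (snd z))" for z
        using Lh[rule_format, of "fst z" "snd z"] L0 by (simp add: dist_norm)
      have dif: "integrable \<pi> (\<lambda>z. h (fst z) - h (snd z))"
        by (rule Bochner_Integration.integrable_bound[OF integrable_mult_right[OF di, of L]]) (measurable, rule AE_I2, rule bnd)
      show ?thesis
      proof (cases "integrable \<pi> (\<lambda>z. h (fst z)) \<or> integrable \<pi> (\<lambda>z. h (snd z))")
        case True
        have i1: "integrable \<pi> (\<lambda>z. h (fst z))"
          using True
        proof (elim disjE)
          assume "integrable \<pi> (\<lambda>z. h (snd z))"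
          then have "integrable \<pi> (\<lambda>z. h (snd z) + (h (fst z) - h (snd z)))"
            using dif by (rule Bochner_Integration.integrable_add)
          then show ?thesis by simp
        qed
        have i2: "integrable \<pi> (\<lambda>z. h (snd z))"
        proof -
          have "integrable \<pi> (\<lambda>z. h (fst z) - (h (fst z) - h (snd z)))"
            using i1 dif by (rule Bochner_Integration.integrable_diff)
          then show ?thesis by simp
        qed
        have "d = norm (\<integral>z. h (fst z) - h (snd z) \<partial>\<pi>)"
          unfolding d_def I1 I2 dist_norm using i1 i2 by simp
        also have "\<dots> \<le> (\<integral>z. norm (h (fst z) - h (snd z)) \<partial>\<pi>)"
          by (rule Bochner_Integration.integral_norm_bound)
        also have "\<dots> \<le> (\<integral>z. L * dist (fst z) (snd z) \<partial>\<pi>)"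
          proof (rule integral_mono)
          show "integrable \<pi> (\<lambda>z. norm (h (fst z) - h (snd z)))" using dif by (rule integrable_norm)
          show "integrable \<pi> (\<lambda>z. L * dist (fst z) (snd z))" using di by (rule integrable_mult_right)
          show "norm (h (fst z) - h (snd z)) \<le> L * dist (fst z) (snd z)" for z
            using Lh[rule_format, of "fst z" "snd z"] by (simp add: dist_norm)
        qed
        also have "\<dots> = L * (\<integral>z. dist (fst z) (snd z) \<partial>\<pi>)" by simp
        finally have "d / L \<le> (\<integral>z. dist (fst z) (snd z) \<partial>\<pi>)"
          using Lp by (simp add: divide_le_eq mult.commute)
        then have "ennreal (d / L) \<le> ennreal (\<integral>z. dist (fst z) (snd z) \<partial>\<pi>)"
          by (rule ennreal_leI)
        also have "\<dots> = (\<integral>\<^sup>+ z. ennreal (dist (fst z) (snd z)) \<partial>\<pi>)"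
          by (rule nn_integral_eq_integral[symmetric]) (use di in auto)
        finally show ?thesis .
      next
        case False
        then have "d = 0" unfolding d_def I1 I2 by (simp add: not_integrable_integral_eq)
        then show ?thesis by simp
      qed
    qed
  qed
  have "ennreal (d / L) \<le> wasserstein1 \<mu> \<nu>"
    unfolding wasserstein1_def by (rule INF_greatest) (rule per)
  then have "ennreal L * ennreal (d / L) \<le> ennreal L * wasserstein1 \<mu> \<nu>"
    by (rule mult_left_mono) simp
  moreover have "ennreal L * ennreal (d / L) = ennreal d"
    using Lp by (simp add: ennreal_mult[symmetric] d_def)
  ultimately show ?thesis unfolding d_def by simp
qed

lemma bl_axis: "bounded_linear (axis i :: 'b::real_normed_vector \<Rightarrow> 'b^'n)"
proof (rule bounded_linear_intro[where K=1])
  show "axis i (x + y) = axis i x + axis i y" for x y :: 'b by (simp add: vec_eq_iff axis_def)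
  show "axis i (r *\<^sub>R x) = r *\<^sub>R axis i x" for r and x :: 'b by (simp add: vec_eq_iff axis_def)
  show "norm (axis i x) \<le> norm x * 1" for x :: 'b
  proof -
    have "norm (axis i x) = L2_set (\<lambda>j. norm (axis i x $ j)) UNIV" by (simp add: norm_vec_def)
    also have "\<dots> \<le> (\<Sum>j\<in>UNIV. norm (axis i x $ j))" by (rule L2_set_le_sum) simp
    also have "\<dots> = (\<Sum>j\<in>UNIV. if j = i then norm x else 0)"
      by (rule sum.cong) (auto simp: axis_def)
    also have "\<dots> = norm x" by simp
    finally show ?thesis by simp
  qed
qed

lemma vec_expand: "v = (\<Sum>i\<in>UNIV. axis i (v $ i))"
  by (simp add: vec_eq_iff axis_def if_distrib)

lemma integrable_vec_comp:
  fixes \<Phi> :: "'a \<Rightarrow> 'b::euclidean_space^'n"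
  assumes "\<And>i. integrable M (\<lambda>x. \<Phi> x $ i)"
  shows "integrable M \<Phi>"
proof -
  have "integrable M (\<lambda>x. \<Sum>i\<in>UNIV. axis i (\<Phi> x $ i))"
    by (intro Bochner_Integration.integrable_sum integrable_bounded_linear[OF bl_axis] assms)
  then show ?thesis using vec_expand[of "\<Phi> x" for x] by simp
qed

lemma integral_vec_comp:
  fixes \<Phi> :: "'a \<Rightarrow> 'b::euclidean_space^'n"
  assumes "integrable M \<Phi>"
  shows "(\<integral>x. \<Phi> x \<partial>M) $ i = (\<integral>x. \<Phi> x $ i \<partial>M)"
  using integral_bounded_linear[OF bounded_linear_vec_nth assms, of i] by simp

lemma abs_prod_le_sq: "\<bar>(a::real) * b\<bar> \<le> a\<^sup>2 + b\<^sup>2"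
proof -
  have "0 \<le> (\<bar>a\<bar> - \<bar>b\<bar>)\<^sup>2" by simp
  also have "(\<bar>a\<bar> - \<bar>b\<bar>)\<^sup>2 = a\<^sup>2 + b\<^sup>2 - 2 * (\<bar>a\<bar> * \<bar>b\<bar>)"
    by (simp add: power2_eq_square algebra_simps)
  finally have h: "2 * (\<bar>a\<bar> * \<bar>b\<bar>) \<le> a\<^sup>2 + b\<^sup>2" by simp
  have z: "0 \<le> \<bar>a\<bar> * \<bar>b\<bar>" by simp
  show ?thesis unfolding abs_mult using h z by linarith
qed

lemma shift_int:
  fixes a b :: "'a \<Rightarrow> real"
  assumes M: "prob_space M" and ia: "integrable M a" and ib: "integrable M b" and iab: "integrable M (\<lambda>x. a x * b x)"
  shows "(\<integral>x. (a x - c) * (b x - d) \<partial>M) = (\<integral>x. a x * b x \<partial>M) - c * (\<integral>x. b x \<partial>M) - d * (\<integral>x. a x \<partial>M) + c * d"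
proof -
  interpret prob_space M by (rule M)
  have e: "(\<lambda>x. (a x - c) * (b x - d)) = (\<lambda>x. ((a x * b x - c * b x) - d * a x) + c * d)"
    by (auto simp: algebra_simps)
  have i1: "integrable M (\<lambda>x. a x * b x - c * b x)" using iab ib by auto
  have i2: "integrable M (\<lambda>x. (a x * b x - c * b x) - d * a x)" using i1 ia by auto
  have "(\<integral>x. (a x - c) * (b x - d) \<partial>M) = (\<integral>x. ((a x * b x - c * b x) - d * a x) + c * d \<partial>M)"
    by (simp only: e)
  also have "\<dots> = (\<integral>x. (a x * b x - c * b x) - d * a x \<partial>M) + c * d"
    using Bochner_Integration.integral_add[OF i2, of "\<lambda>_. c * d"] prob_space by simp
  also have "(\<integral>x. (a x * b x - c * b x) - d * a x \<partial>M) = (\<integral>x. a x * b x - c * b x \<partial>M) - d * (\<integral>x. a x \<partial>M)"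
    using Bochner_Integration.integral_diff[OF i1, of "\<lambda>x. d * a x"] ia by simp
  also have "(\<integral>x. a x * b x - c * b x \<partial>M) = (\<integral>x. a x * b x \<partial>M) - c * (\<integral>x. b x \<partial>M)"
    using Bochner_Integration.integral_diff[OF iab, of "\<lambda>x. c * b x"] ib by simp
  finally show ?thesis .
qed

context
  fixes M :: "'a measure" and Z :: "'a \<Rightarrow> real^'k"
  assumes M: "prob_space M" and Zm[measurable]: "Z \<in> borel_measurable M"
    and Z2: "integrable M (\<lambda>x. (norm (Z x))\<^sup>2)"
begin

lemma Zc[measurable]: "(\<lambda>x. Z x $ i) \<in> borel_measurable M"
  by (rule measurable_compose[OF Zm borel_measurable_nth])

lemma l2_norm: "integrable M (\<lambda>x. norm (Z x))"
  using finite_measure.square_integrable_imp_integrable[of M "\<lambda>x. norm (Z x)"] M Z2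
  by (simp add: prob_space_def)

lemma l2_int: "integrable M Z"
  using l2_norm integrable_norm_iff[OF Zm] by blast

lemma l2_comp: "integrable M (\<lambda>x. Z x $ i)"
  by (rule Bochner_Integration.integrable_bound[OF l2_norm]) (auto intro!: AE_I2 simp: component_le_norm_cart)

lemma l2_prod: "integrable M (\<lambda>x. Z x $ i * Z x $ j)"
proof (rule Bochner_Integration.integrable_bound[OF Z2])
  show "(\<lambda>x. Z x $ i * Z x $ j) \<in> borel_measurable M" by measurable
  show "AE x in M. norm (Z x $ i * Z x $ j) \<le> norm ((norm (Z x))\<^sup>2)"
  proof (intro AE_I2)
    fix x
    have "\<bar>Z x $ i\<bar> * \<bar>Z x $ j\<bar> \<le> norm (Z x) * norm (Z x)"
      by (intro mult_mono component_le_norm_cart) auto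
    then show "norm (Z x $ i * Z x $ j) \<le> norm ((norm (Z x))\<^sup>2)"
      by (simp add: abs_mult power2_eq_square)
  qed
qed

lemma l2_integral_comp: "(\<integral>x. Z x \<partial>M) $ i = (\<integral>x. Z x $ i \<partial>M)"
  by (rule integral_vec_comp[OF l2_int])

lemma l2_shift: "(\<integral>x. (Z x $ i - c) * (Z x $ j - d) \<partial>M) = (\<integral>x. Z x $ i * Z x $ j \<partial>M) - c * (\<integral>x. Z x $ j \<partial>M) - d * (\<integral>x. Z x $ i \<partial>M) + c * d"
  by (rule shift_int[OF M l2_comp l2_comp l2_prod])

lemma l2_cov: "cov_mat M Z $ i $ j = (\<integral>x. Z x $ i * Z x $ j \<partial>M) - (\<integral>x. Z x $ i \<partial>M) * (\<integral>x. Z x $ j \<partial>M)"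
  unfolding cov_mat_def using l2_shift[where i=i and j=j and c="\<integral>x. Z x $ i \<partial>M" and d="\<integral>x. Z x $ j \<partial>M"]
  by simp

lemma l2_var: "(\<integral>x. Z x $ i \<partial>M)\<^sup>2 \<le> (\<integral>x. Z x $ i * Z x $ i \<partial>M)"
proof -
  let ?a = "\<integral>x. Z x $ i \<partial>M"
  have "0 \<le> (\<integral>x. (Z x $ i - ?a) * (Z x $ i - ?a) \<partial>M)"
    by (rule integral_nonneg_AE) simp
  also have "\<dots> = (\<integral>x. Z x $ i * Z x $ i \<partial>M) - ?a\<^sup>2"
    using l2_shift[where i=i and j=i and c="?a" and d="?a"] by (simp add: power2_eq_square)
  finally show ?thesis by simp
qed

lemma l2_qform: "v \<bullet> (cov_mat M Z *v v) = (\<integral>x. (v \<bullet> Z x)\<^sup>2 \<partial>M) - (\<integral>x. v \<bullet> Z x \<partial>M)\<^sup>2"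
proof -
  have ivz: "(\<integral>x. v \<bullet> Z x \<partial>M) = (\<Sum>i\<in>UNIV. v $ i * (\<integral>x. Z x $ i \<partial>M))"
    unfolding inner_vec_def using l2_comp by (simp add: Bochner_Integration.integral_sum)
  have sq: "(v \<bullet> Z x)\<^sup>2 = (\<Sum>i\<in>UNIV. \<Sum>j\<in>UNIV. v $ i * v $ j * (Z x $ i * Z x $ j))" for x
    unfolding inner_vec_def power2_eq_square sum_product by (simp add: algebra_simps)
  have isq: "(\<integral>x. (v \<bullet> Z x)\<^sup>2 \<partial>M) = (\<Sum>i\<in>UNIV. \<Sum>j\<in>UNIV. v $ i * v $ j * (\<integral>x. Z x $ i * Z x $ j \<partial>M))"
    unfolding sq using l2_prod by (simp add: Bochner_Integration.integral_sum)
  have "v \<bullet> (cov_mat M Z *v v) = (\<Sum>i\<in>UNIV. \<Sum>j\<in>UNIV. v $ i * v $ j * cov_mat M Z $ i $ j)"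
    unfolding inner_vec_def matrix_vector_mult_def by (simp add: sum_distrib_left algebra_simps)
  also have "\<dots> = (\<Sum>i\<in>UNIV. \<Sum>j\<in>UNIV. v $ i * v $ j * (\<integral>x. Z x $ i * Z x $ j \<partial>M))
      - (\<Sum>i\<in>UNIV. \<Sum>j\<in>UNIV. (v $ i * (\<integral>x. Z x $ i \<partial>M)) * (v $ j * (\<integral>x. Z x $ j \<partial>M)))"
    unfolding l2_cov by (simp add: algebra_simps sum_subtractf)
  also have "\<dots> = (\<integral>x. (v \<bullet> Z x)\<^sup>2 \<partial>M) - (\<integral>x. v \<bullet> Z x \<partial>M)\<^sup>2"
  proof -
    have "(\<integral>x. v \<bullet> Z x \<partial>M)\<^sup>2 = (\<Sum>i\<in>UNIV. \<Sum>j\<in>UNIV. (v $ i * (\<integral>x. Z x $ i \<partial>M)) * (v $ j * (\<integral>x. Z x $ j \<partial>M)))"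
      unfolding ivz power2_eq_square sum_product ..
    then show ?thesis using isq by simp
  qed
  finally show ?thesis .
qed

end


lemma avg_lemma:
  fixes s :: "'g \<Rightarrow> 'b::{banach,second_countable_topology}"
  assumes si: "integrable Q s" and L0: "0 \<le> L"
    and b: "\<And>g. g \<in> space Q \<Longrightarrow> ennreal (norm (s g)) \<le> ennreal L * W g"
  shows "ennreal (norm (\<integral>g. s g \<partial>Q)) \<le> ennreal L * (\<integral>\<^sup>+g. W g \<partial>Q)"
proof (cases "L = 0")
  case True
  then have "s g = 0" if "g \<in> space Q" for g using b[OF that] by simp
  then have "(\<integral>g. s g \<partial>Q) = (\<integral>g. 0 \<partial>Q)" by (intro Bochner_Integration.integral_cong) auto
  then show ?thesis by simp
next
  case False
  then have Lp: "L > 0" using L0 by simp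
  have b2: "ennreal (norm (s g) / L) \<le> W g" if "g \<in> space Q" for g
  proof -
    have "ennreal (norm (s g) / L) = ennreal (1 / L) * ennreal (norm (s g))"
      using Lp by (simp add: ennreal_mult[symmetric])
    also have "\<dots> \<le> ennreal (1 / L) * (ennreal L * W g)"
      by (rule mult_left_mono[OF b[OF that]]) simp
    also have "\<dots> = W g"
      using Lp by (simp add: mult.assoc[symmetric] ennreal_mult[symmetric])
    finally show ?thesis .
  qed
  have ni: "integrable Q (\<lambda>g. norm (s g) / L)" using si by simp
  have "ennreal (norm (\<integral>g. s g \<partial>Q)) \<le> ennreal (\<integral>g. norm (s g) \<partial>Q)"
    by (intro ennreal_leI Bochner_Integration.integral_norm_bound)
  also have "\<dots> = ennreal L * ennreal (\<integral>g. norm (s g) / L \<partial>Q)"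
    using Lp by (simp add: ennreal_mult[symmetric])
  also have "ennreal (\<integral>g. norm (s g) / L \<partial>Q) = (\<integral>\<^sup>+g. ennreal (norm (s g) / L) \<partial>Q)"
    by (rule nn_integral_eq_integral[symmetric]) (use ni Lp in auto)
  also have "\<dots> \<le> (\<integral>\<^sup>+g. W g \<partial>Q)"
    by (rule nn_integral_mono) (rule b2)
  finally show ?thesis by (simp add: mult_left_mono)
qed

lemma lip_const_bound:
  fixes \<phi> :: "'a::metric_space \<Rightarrow> 'b::metric_space"
  assumes "lip_const \<phi> \<noteq> \<infinity>"
  shows "dist (\<phi> a) (\<phi> b) \<le> enn2real (lip_const \<phi>) * dist a b"
proof (cases "a = b")
  case True then show ?thesis by simp
next
  case False
  then have "ennreal (dist (\<phi> a) (\<phi> b) / dist a b) \<le> lip_const \<phi>"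
    unfolding lip_const_def by (intro SUP_upper2[of "(a, b)"]) auto
  then have "enn2real (ennreal (dist (\<phi> a) (\<phi> b) / dist a b)) \<le> enn2real (lip_const \<phi>)"
    by (rule enn2real_mono) (use assms in \<open>simp add: top.not_eq_extremum\<close>)
  then have "dist (\<phi> a) (\<phi> b) / dist a b \<le> enn2real (lip_const \<phi>)" by simp
  then show ?thesis using False by (simp add: divide_le_eq)
qed

lemma trunc_lip:
  fixes v :: "real^'k"
  assumes R: "0 \<le> R"
  shows "dist ((min \<bar>v \<bullet> a\<bar> R)\<^sup>2) ((min \<bar>v \<bullet> b\<bar> R)\<^sup>2) \<le> (2 * R * norm v) * dist a b"
proof -
  define ua where "ua = min \<bar>v \<bullet> a\<bar> R"
  define ub where "ub = min \<bar>v \<bullet> b\<bar> R"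
  have ua: "0 \<le> ua" "ua \<le> R" and ub: "0 \<le> ub" "ub \<le> R" using R by (auto simp: ua_def ub_def)
  have "\<bar>ua - ub\<bar> \<le> \<bar>\<bar>v \<bullet> a\<bar> - \<bar>v \<bullet> b\<bar>\<bar>" unfolding ua_def ub_def by (auto simp: min_def abs_if)
  also have "\<dots> \<le> \<bar>v \<bullet> a - v \<bullet> b\<bar>" by (rule abs_triangle_ineq3)
  also have "\<dots> = \<bar>v \<bullet> (a - b)\<bar>" by (simp add: inner_diff_right)
  also have "\<dots> \<le> norm v * norm (a - b)" by (rule Cauchy_Schwarz_ineq2)
  finally have d: "\<bar>ua - ub\<bar> \<le> norm v * dist a b" by (simp add: dist_norm)
  have "ua\<^sup>2 - ub\<^sup>2 = (ua - ub) * (ua + ub)" by (simp add: power2_eq_square algebra_simps)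
  then have "dist (ua\<^sup>2) (ub\<^sup>2) = \<bar>ua - ub\<bar> * (ua + ub)"
    using ua ub by (simp add: dist_real_def abs_mult)
  also have "\<dots> \<le> (norm v * dist a b) * (2 * R)"
    by (rule mult_mono) (use d ua ub in auto)
  finally show ?thesis unfolding ua_def ub_def by (simp add: algebra_simps)
qed

lemma sup_trunc: "(SUP n. ennreal ((min \<bar>t\<bar> (real n))\<^sup>2)) = ennreal (t\<^sup>2)"
proof (rule antisym)
  show "(SUP n. ennreal ((min \<bar>t\<bar> (real n))\<^sup>2)) \<le> ennreal (t\<^sup>2)"
  proof (rule SUP_least)
    fix n :: nat
    have "(min \<bar>t\<bar> (real n))\<^sup>2 \<le> \<bar>t\<bar>\<^sup>2" by (rule power_mono) auto
    then show "ennreal ((min \<bar>t\<bar> (real n))\<^sup>2) \<le> ennreal (t\<^sup>2)" by (intro ennreal_leI) simp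
  qed
  have "min \<bar>t\<bar> (real (nat \<lceil>\<bar>t\<bar>\<rceil>)) = \<bar>t\<bar>"
    by (simp add: min_def)
  then show "ennreal (t\<^sup>2) \<le> (SUP n. ennreal ((min \<bar>t\<bar> (real n))\<^sup>2))"
    by (intro SUP_upper2[of "nat \<lceil>\<bar>t\<bar>\<rceil>"]) auto
qed

lemma ennreal_bound_real:
  assumes "ennreal x \<le> ennreal a * E" "0 \<le> a" "E \<noteq> \<infinity>"
  shows "x \<le> a * enn2real E"
proof -
  have "E = ennreal (enn2real E)" using assms(3) by (simp add: ennreal_enn2real top.not_eq_extremum)
  then have "ennreal a * E = ennreal (a * enn2real E)" using assms(2) by (simp add: ennreal_mult)
  then show ?thesis using assms(1) assms(2) by (simp add: ennreal_le_iff)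
qed

lemma abs_integral_le_const:
  fixes g :: "'a \<Rightarrow> real"
  assumes M: "prob_space M" and gm: "g \<in> borel_measurable M" and b: "\<And>x. x \<in> space M \<Longrightarrow> \<bar>g x\<bar> \<le> R"
  shows "\<bar>\<integral>x. g x \<partial>M\<bar> \<le> R"
proof -
  interpret prob_space M by (rule M)
  have gi: "integrable M g"
    by (rule Bochner_Integration.integrable_bound[OF integrable_const[of R] gm]) (auto intro!: AE_I2 intro: order_trans[OF b abs_ge_self])
  have "\<bar>\<integral>x. g x \<partial>M\<bar> \<le> (\<integral>x. \<bar>g x\<bar> \<partial>M)"
    using Bochner_Integration.integral_norm_bound[of M g] by simp
  also have "\<dots> \<le> (\<integral>x. R \<partial>M)"
    by (rule integral_mono) (use gi b in auto)
  also have "\<dots> = R" using prob_space by simp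
  finally show ?thesis .
qed

locale setting =
  fixes P :: "'x measure" and Q :: "'g::{zero,topological_space} measure"
    and act :: "'g \<Rightarrow> 'x \<Rightarrow> 'x" and f :: "'x \<Rightarrow> real^'k"
  assumes P: "prob_space P" and Q: "prob_space Q" and sQ: "sets Q = sets borel"
    and act_id: "\<And>x. act 0 x = x"
    and f_meas: "(\<lambda>(x, g). f (act g x)) \<in> borel_measurable (P \<Otimes>\<^sub>M Q)"
    and f_L2: "integrable (P \<Otimes>\<^sub>M Q) (\<lambda>(x, g). (norm (f (act g x)))\<^sup>2)"
begin

sublocale PQ: pair_prob_space P Q
  using P Q unfolding pair_prob_space_def pair_sigma_finite_def
  by (auto intro: prob_space_imp_sigma_finite)

abbreviation "Wg g \<equiv> wasserstein1 (distr P borel (\<lambda>x. f (act g x))) (distr P borel f)"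
abbreviation "EWs \<equiv> \<integral>\<^sup>+ g. Wg g \<partial>Q"

lemma spQ: "space Q = UNIV"
  using sets_eq_imp_space_eq[OF sQ] by simp

lemma Ym[measurable]: "(\<lambda>(x, g). f (act g x)) \<in> borel_measurable (P \<Otimes>\<^sub>M Q)"
  by (rule f_meas)

lemma fgm[measurable]: "(\<lambda>x. f (act g x)) \<in> borel_measurable P"
proof -
  have "(\<lambda>x. (x, g)) \<in> measurable P (P \<Otimes>\<^sub>M Q)"
    by (rule measurable_Pair) (auto simp: spQ)
  from measurable_compose[OF this f_meas] show ?thesis by simp
qed

lemma fm[measurable]: "f \<in> borel_measurable P"
  using fgm[of 0] by (simp add: act_id)

lemma fxm[measurable]: "x \<in> space P \<Longrightarrow> (\<lambda>g. f (act g x)) \<in> borel_measurable Q"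
proof -
  assume "x \<in> space P"
  then have "(\<lambda>g. (x, g)) \<in> measurable Q (P \<Otimes>\<^sub>M Q)"
    by (intro measurable_Pair) auto
  from measurable_compose[OF this f_meas] show ?thesis by simp
qed

lemma normY_int: "integrable (P \<Otimes>\<^sub>M Q) (\<lambda>(x, g). norm (f (act g x)))"
proof -
  have m: "(\<lambda>(x, g). norm (f (act g x))) \<in> borel_measurable (P \<Otimes>\<^sub>M Q)"
    using f_meas by (simp add: case_prod_beta' measurable_compose[OF _ borel_measurable_norm])
  have "integrable (P \<Otimes>\<^sub>M Q) (\<lambda>z. ((\<lambda>(x, g). norm (f (act g x))) z)\<^sup>2)"
    using f_L2 by (simp add: case_prod_beta')
  from PQ.square_integrable_imp_integrable[OF m this] show ?thesis .
qed

lemma Y_int: "integrable (P \<Otimes>\<^sub>M Q) (\<lambda>(x, g). f (act g x))"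
proof -
  have "integrable (P \<Otimes>\<^sub>M Q) (\<lambda>z. norm ((\<lambda>(x, g). f (act g x)) z))"
    using normY_int by (simp add: case_prod_beta')
  then show ?thesis using integrable_norm_iff[OF f_meas] by blast
qed

lemma avg_bound:
  fixes h :: "real^'k \<Rightarrow> 'b::{banach,second_countable_topology}"
  assumes L0: "0 \<le> L" and Lh: "\<forall>a b. dist (h a) (h b) \<le> L * dist a b"
    and hi: "integrable (P \<Otimes>\<^sub>M Q) (\<lambda>(x, g). h (f (act g x)))"
  shows "ennreal (norm ((\<integral>z. (\<lambda>(x, g). h (f (act g x))) z \<partial>(P \<Otimes>\<^sub>M Q)) - (\<integral>x. h (f x) \<partial>P)))
          \<le> ennreal L * EWs"
proof -
  have hm[measurable]: "h \<in> borel_measurable borel" using lip_meas Lh L0 by blast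
  define s where "s g = (\<integral>x. h (f (act g x)) \<partial>P) - (\<integral>x. h (f x) \<partial>P)" for g
  have i1: "integrable Q (\<lambda>g. \<integral>x. h (f (act g x)) \<partial>P)"
    using PQ.integrable_snd[of "\<lambda>x g. h (f (act g x))"] hi by simp
  have e1: "(\<integral>g. (\<integral>x. h (f (act g x)) \<partial>P) \<partial>Q) = (\<integral>z. (\<lambda>(x, g). h (f (act g x))) z \<partial>(P \<Otimes>\<^sub>M Q))"
    using PQ.integral_snd[of "\<lambda>x g. h (f (act g x))"] hi by simp
  have "(\<integral>g. s g \<partial>Q) = (\<integral>g. (\<integral>x. h (f (act g x)) \<partial>P) \<partial>Q) - (\<integral>g. (\<integral>x. h (f x) \<partial>P) \<partial>Q)"
    unfolding s_def by (rule Bochner_Integration.integral_diff[OF i1]) simp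
  also have "\<dots> = (\<integral>z. (\<lambda>(x, g). h (f (act g x))) z \<partial>(P \<Otimes>\<^sub>M Q)) - (\<integral>x. h (f x) \<partial>P)"
    using e1 prob_space.prob_space[OF Q] by simp
  finally have eq: "(\<integral>g. s g \<partial>Q) = (\<integral>z. (\<lambda>(x, g). h (f (act g x))) z \<partial>(P \<Otimes>\<^sub>M Q)) - (\<integral>x. h (f x) \<partial>P)" .
  have si: "integrable Q s" unfolding s_def using i1 by simp
  have pw: "ennreal (norm (s g)) \<le> ennreal L * Wg g" for g
  proof -
    have pd1: "prob_space (distr P borel (\<lambda>x. f (act g x)))"
      by (rule prob_space.prob_space_distr[OF P]) simp
    have pd2: "prob_space (distr P borel f)"
      by (rule prob_space.prob_space_distr[OF P]) simp
    have "(\<integral>y. h y \<partial>distr P borel (\<lambda>x. f (act g x))) = (\<integral>x. h (f (act g x)) \<partial>P)"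
      by (rule integral_distr) simp_all
    moreover have "(\<integral>y. h y \<partial>distr P borel f) = (\<integral>x. h (f x) \<partial>P)"
      by (rule integral_distr) simp_all
    ultimately show ?thesis
      using coupling_bound[OF pd1 pd2 L0 Lh] unfolding s_def by (simp add: dist_norm)
  qed
  show ?thesis
    using avg_lemma[OF si L0, of Wg] pw eq by simp
qed

lemma part1: "ennreal (norm ((\<integral>x. orbit_avg Q act f x \<partial>P) - (\<integral>x. f x \<partial>P))) \<le> EWs"
proof -
  have "(\<integral>x. orbit_avg Q act f x \<partial>P) = (\<integral>z. (\<lambda>(x, g). f (act g x)) z \<partial>(P \<Otimes>\<^sub>M Q))"
    unfolding orbit_avg_def using PQ.integral_fst[of "\<lambda>x g. f (act g x)"] Y_int by simp
  moreover have "ennreal (norm ((\<integral>z. (\<lambda>(x, g). f (act g x)) z \<partial>(P \<Otimes>\<^sub>M Q)) - (\<integral>x. f x \<partial>P))) \<le> ennreal 1 * EWs"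
    using avg_bound[of 1 "\<lambda>y. y"] Y_int by simp
  ultimately show ?thesis by simp
qed

lemma part3:
  fixes \<phi> :: "real^'k \<Rightarrow> real"
  assumes lip: "lip_const \<phi> \<noteq> \<infinity>"
  shows "ennreal \<bar>(\<integral>x. \<phi> (orbit_avg Q act f x) \<partial>P) - (\<integral>x. \<phi> (f x) \<partial>P)
               - ((\<integral>x. \<phi> (orbit_avg Q act f x) \<partial>P) - (\<integral>x. orbit_avg Q act (\<lambda>y. \<phi> (f y)) x \<partial>P))\<bar>
       \<le> lip_const \<phi> * EWs"
proof -
  define L where "L = enn2real (lip_const \<phi>)"
  have L0: "0 \<le> L" unfolding L_def by simp
  have Lh: "\<forall>a b. dist (\<phi> a) (\<phi> b) \<le> L * dist a b"
    unfolding L_def using lip_const_bound[OF lip] by blast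
  have hm[measurable]: "\<phi> \<in> borel_measurable borel" using lip_meas Lh L0 by blast
  have bi: "integrable (P \<Otimes>\<^sub>M Q) (\<lambda>(x, g). \<bar>\<phi> 0\<bar> + L * norm (f (act g x)))"
  proof -
    have "integrable (P \<Otimes>\<^sub>M Q) (\<lambda>z. \<bar>\<phi> 0\<bar> + L * (\<lambda>(x, g). norm (f (act g x))) z)"
      by (intro Bochner_Integration.integrable_add integrable_mult_right normY_int) simp
    then show ?thesis by (simp add: case_prod_beta')
  qed
  have hi: "integrable (P \<Otimes>\<^sub>M Q) (\<lambda>(x, g). \<phi> (f (act g x)))"
  proof (rule Bochner_Integration.integrable_bound[OF bi])
    show "(\<lambda>(x, g). \<phi> (f (act g x))) \<in> borel_measurable (P \<Otimes>\<^sub>M Q)"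
      using measurable_compose[OF f_meas hm] by (simp add: case_prod_beta' comp_def)
    have "norm (\<phi> y) \<le> norm (\<bar>\<phi> 0\<bar> + L * norm y)" for y
    proof -
      have "\<bar>\<phi> y - \<phi> 0\<bar> \<le> L * norm y" using Lh[rule_format, of y 0] by (simp add: dist_real_def dist_norm)
      moreover have "0 \<le> L * norm y" using L0 by simp
      ultimately show ?thesis by simp
    qed
    then show "AE z in P \<Otimes>\<^sub>M Q. norm ((\<lambda>(x, g). \<phi> (f (act g x))) z) \<le> norm ((\<lambda>(x, g). \<bar>\<phi> 0\<bar> + L * norm (f (act g x))) z)"
      by (intro AE_I2) (simp add: case_prod_beta')
  qed
  have "(\<integral>x. orbit_avg Q act (\<lambda>y. \<phi> (f y)) x \<partial>P) = (\<integral>z. (\<lambda>(x, g). \<phi> (f (act g x))) z \<partial>(P \<Otimes>\<^sub>M Q))"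
    unfolding orbit_avg_def using PQ.integral_fst[of "\<lambda>x g. \<phi> (f (act g x))"] hi by simp
  moreover have "ennreal (norm ((\<integral>z. (\<lambda>(x, g). \<phi> (f (act g x))) z \<partial>(P \<Otimes>\<^sub>M Q)) - (\<integral>x. \<phi> (f x) \<partial>P))) \<le> ennreal L * EWs"
    using avg_bound[OF L0 Lh hi] by simp
  moreover have "ennreal L = lip_const \<phi>" unfolding L_def using lip by (simp add: ennreal_enn2real top.not_eq_extremum)
  ultimately show ?thesis by (simp add: abs_minus_commute)
qed

lemma pqP: "prob_space (P \<Otimes>\<^sub>M Q)"
  by (rule PQ.P.prob_space_axioms)

lemma L2PQ: "integrable (P \<Otimes>\<^sub>M Q) (\<lambda>z. (norm ((\<lambda>(x, g). f (act g x)) z))\<^sup>2)"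
  using f_L2 by (simp add: case_prod_beta')

lemma intYY: "integrable (P \<Otimes>\<^sub>M Q) (\<lambda>(x, g). f (act g x) $ i * f (act g x) $ j)"
  using l2_prod[OF pqP f_meas L2PQ, of i j] by (simp add: case_prod_beta')

lemma intYi: "integrable (P \<Otimes>\<^sub>M Q) (\<lambda>(x, g). f (act g x) $ i)"
  using l2_comp[OF pqP f_meas L2PQ, of i] by (simp add: case_prod_beta')

lemma part2_id:
  "cov_mat P (orbit_avg Q act f) =
     cov_mat (P \<Otimes>\<^sub>M Q) (\<lambda>(x, g). f (act g x)) - (\<integral>x. cov_mat Q (\<lambda>g. f (act g x)) \<partial>P)"
proof -
  define m where "m i = (\<integral>z. (\<lambda>(x, g). f (act g x)) z $ i \<partial>(P \<Otimes>\<^sub>M Q))" for i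
  define G where "G i x = (\<integral>g. f (act g x) $ i \<partial>Q)" for i x
  define D where "D i j x = (\<integral>g. f (act g x) $ i * f (act g x) $ j \<partial>Q)" for i j x
  define C where "C x = cov_mat Q (\<lambda>g. f (act g x))" for x
  define F where "F = orbit_avg Q act f"
  have sfQ: "sigma_finite_measure Q" using Q by (rule prob_space_imp_sigma_finite)
  have intD: "integrable P (D i j)" for i j
    using PQ.integrable_fst[OF intYY[of i j]] unfolding D_def by simp
  have intG: "integrable P (G i)" for i
    using PQ.integrable_fst[OF intYi[of i]] unfolding G_def by simp
  have eD: "(\<integral>x. D i j x \<partial>P) = (\<integral>z. (\<lambda>(x, g). f (act g x)) z $ i * (\<lambda>(x, g). f (act g x)) z $ j \<partial>(P \<Otimes>\<^sub>M Q))" for i j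
    using PQ.integral_fst[OF intYY[of i j]] unfolding D_def by (simp add: case_prod_beta')
  have eG: "(\<integral>x. G i x \<partial>P) = m i" for i
    using PQ.integral_fst[OF intYi[of i]] unfolding G_def m_def by (simp add: case_prod_beta')
  have Gm[measurable]: "G i \<in> borel_measurable P" for i using intG by (rule borel_measurable_integrable)
  have Fint: "integrable P F"
    using PQ.integrable_fst[OF Y_int] unfolding F_def orbit_avg_def by simp
  have Fm[measurable]: "F \<in> borel_measurable P" using Fint by (rule borel_measurable_integrable)
  have Fim[measurable]: "(\<lambda>x. F x $ i) \<in> borel_measurable P" for i
    by (rule measurable_compose[OF Fm borel_measurable_nth])
  have aeL2: "AE x in P. integrable Q (\<lambda>g. (norm (f (act g x)))\<^sup>2)"
    using PQ.AE_integrable_fst[of "\<lambda>x g. (norm (f (act g x)))\<^sup>2"] f_L2 by simp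
  have good: "(\<forall>i. F x $ i = G i x) \<and> (\<forall>i j. C x $ i $ j = D i j x - G i x * G j x) \<and> (\<forall>i. (G i x)\<^sup>2 \<le> D i i x)"
    if x: "x \<in> space P" and ix: "integrable Q (\<lambda>g. (norm (f (act g x)))\<^sup>2)" for x
  proof -
    note fx = fxm[OF x]
    show ?thesis
      using l2_integral_comp[OF Q fx ix] l2_cov[OF Q fx ix] l2_var[OF Q fx ix]
      unfolding F_def C_def G_def D_def orbit_avg_def by (simp add: power2_eq_square)
  qed
  have aeF: "AE x in P. \<forall>i. F x $ i = G i x"
    using aeL2 by (rule AE_mp) (auto intro!: AE_I2 dest: good)
  have aeC: "AE x in P. \<forall>i j. C x $ i $ j = D i j x - G i x * G j x"
    using aeL2 by (rule AE_mp) (auto intro!: AE_I2 dest: good)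
  have aeV: "AE x in P. \<forall>i. (G i x)\<^sup>2 \<le> D i i x"
    using aeL2 by (rule AE_mp) (auto intro!: AE_I2 dest: good)
  have intGG: "integrable P (\<lambda>x. G i x * G j x)" for i j
  proof (rule Bochner_Integration.integrable_bound)
    show "integrable P (\<lambda>x. D i i x + D j j x)" using intD by simp
    show "(\<lambda>x. G i x * G j x) \<in> borel_measurable P" by measurable
    show "AE x in P. norm (G i x * G j x) \<le> norm (D i i x + D j j x)"
      using aeV
    proof (rule AE_mp, intro AE_I2 impI)
      fix x assume "\<forall>i. (G i x)\<^sup>2 \<le> D i i x"
      then have "(G i x)\<^sup>2 \<le> D i i x" "(G j x)\<^sup>2 \<le> D j j x" by auto
      moreover have "\<bar>G i x * G j x\<bar> \<le> (G i x)\<^sup>2 + (G j x)\<^sup>2" by (rule abs_prod_le_sq)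
      ultimately show "norm (G i x * G j x) \<le> norm (D i i x + D j j x)" by simp
    qed
  qed
  have Cm: "(\<lambda>x. C x $ i $ j) \<in> borel_measurable P" for i j
  proof -
    have "(\<lambda>z. ((\<lambda>(x, g). f (act g x) $ i) z - G i (fst z)) * ((\<lambda>(x, g). f (act g x) $ j) z - G j (fst z)))
        \<in> borel_measurable (P \<Otimes>\<^sub>M Q)"
      using borel_measurable_integrable[OF intYi[of i]] borel_measurable_integrable[OF intYi[of j]]
        measurable_compose[OF measurable_fst Gm[of i]] measurable_compose[OF measurable_fst Gm[of j]]
      by (intro borel_measurable_times borel_measurable_diff) (auto simp: comp_def)
    then have "case_prod (\<lambda>x g. (f (act g x) $ i - G i x) * (f (act g x) $ j - G j x)) \<in> borel_measurable (P \<Otimes>\<^sub>M Q)"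
      by (simp add: case_prod_beta')
    from sigma_finite_measure.borel_measurable_lebesgue_integral[OF sfQ this]
    show ?thesis unfolding C_def cov_mat_def G_def by simp
  qed
  have intCij: "integrable P (\<lambda>x. C x $ i $ j)" for i j
  proof -
    have "integrable P (\<lambda>x. D i j x - G i x * G j x)" using intD intGG by simp
    moreover have "AE x in P. C x $ i $ j = D i j x - G i x * G j x" using aeC by auto
    ultimately show ?thesis using integrable_cong_AE[OF Cm _ \<open>AE x in P. C x $ i $ j = _\<close>] intD intGG
      by simp
  qed
  have intCi: "integrable P (\<lambda>x. C x $ i)" for i
    by (rule integrable_vec_comp) (rule intCij)
  have intC: "integrable P C"
    by (rule integrable_vec_comp) (rule intCi)
  have EC: "(\<integral>x. C x \<partial>P) $ i $ j = (\<integral>x. D i j x \<partial>P) - (\<integral>x. G i x * G j x \<partial>P)" for i j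
  proof -
    have "(\<integral>x. C x \<partial>P) $ i $ j = (\<integral>x. C x $ i $ j \<partial>P)"
      using integral_vec_comp[OF intC, of i] integral_vec_comp[OF intCi[of i], of j] by simp
    also have "\<dots> = (\<integral>x. D i j x - G i x * G j x \<partial>P)"
      by (rule integral_cong_AE) (use Cm intD intGG aeC in \<open>auto simp: borel_measurable_integrable\<close>)
    also have "\<dots> = (\<integral>x. D i j x \<partial>P) - (\<integral>x. G i x * G j x \<partial>P)"
      using intD intGG by simp
    finally show ?thesis .
  qed
  have LHS: "cov_mat P F $ i $ j = (\<integral>x. G i x * G j x \<partial>P) - m i * m j" for i j
  proof -
    have mF: "(\<integral>x. F x $ k \<partial>P) = m k" for k
    proof -
      have "(\<integral>x. F x $ k \<partial>P) = (\<integral>x. G k x \<partial>P)"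
        by (rule integral_cong_AE) (use aeF in auto)
      then show ?thesis using eG by simp
    qed
    have "cov_mat P F $ i $ j = (\<integral>x. (F x $ i - m i) * (F x $ j - m j) \<partial>P)"
      unfolding cov_mat_def mF by simp
    also have "\<dots> = (\<integral>x. (G i x - m i) * (G j x - m j) \<partial>P)"
      by (rule integral_cong_AE) (use aeF in auto)
    also have "\<dots> = (\<integral>x. G i x * G j x \<partial>P) - m i * m j"
      using shift_int[OF P intG[of i] intG[of j] intGG[of i j], of "m i" "m j"] eG by simp
    finally show ?thesis .
  qed
  have RHS: "cov_mat (P \<Otimes>\<^sub>M Q) (\<lambda>(x, g). f (act g x)) $ i $ j = (\<integral>x. D i j x \<partial>P) - m i * m j" for i j
    using l2_cov[OF pqP f_meas L2PQ, of i j] eD[of i j] unfolding m_def by simp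
  show ?thesis
    unfolding F_def[symmetric] C_def[symmetric]
    by (simp add: vec_eq_iff LHS RHS EC)
qed

lemma sup_bound: "sup_norm f \<noteq> \<infinity> \<Longrightarrow> norm (f x) \<le> enn2real (sup_norm f)"
proof -
  assume fin: "sup_norm f \<noteq> \<infinity>"
  have "ennreal (norm (f x)) \<le> sup_norm f" unfolding sup_norm_def by (rule SUP_upper) simp
  then have "enn2real (ennreal (norm (f x))) \<le> enn2real (sup_norm f)"
    by (rule enn2real_mono) (use fin in \<open>simp add: top.not_eq_extremum\<close>)
  then show ?thesis by simp
qed

lemma vY_sq_int: "integrable (P \<Otimes>\<^sub>M Q) (\<lambda>z. (v \<bullet> (\<lambda>(x, g). f (act g x)) z)\<^sup>2)"
proof (rule Bochner_Integration.integrable_bound)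
  show "integrable (P \<Otimes>\<^sub>M Q) (\<lambda>z. (norm v)\<^sup>2 * (norm ((\<lambda>(x, g). f (act g x)) z))\<^sup>2)"
    using L2PQ by (rule integrable_mult_right)
  show "(\<lambda>z. (v \<bullet> (\<lambda>(x, g). f (act g x)) z)\<^sup>2) \<in> borel_measurable (P \<Otimes>\<^sub>M Q)"
    using f_meas by measurable
  have "(v \<bullet> y)\<^sup>2 \<le> (norm v)\<^sup>2 * (norm y)\<^sup>2" for y :: "real^'k"
  proof -
    have "\<bar>v \<bullet> y\<bar>\<^sup>2 \<le> (norm v * norm y)\<^sup>2"
      by (rule power_mono[OF Cauchy_Schwarz_ineq2]) simp
    then show ?thesis by (simp add: power_mult_distrib)
  qed
  then show "AE z in P \<Otimes>\<^sub>M Q. norm ((v \<bullet> (\<lambda>(x, g). f (act g x)) z)\<^sup>2) \<le> norm ((norm v)\<^sup>2 * (norm ((\<lambda>(x, g). f (act g x)) z))\<^sup>2)"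
    by (intro AE_I2) simp
qed

lemma avg_trunc:
  assumes R: "0 \<le> R"
  shows "ennreal \<bar>(\<integral>z. (min \<bar>v \<bullet> (\<lambda>(x, g). f (act g x)) z\<bar> R)\<^sup>2 \<partial>(P \<Otimes>\<^sub>M Q)) - (\<integral>x. (min \<bar>v \<bullet> f x\<bar> R)\<^sup>2 \<partial>P)\<bar>
     \<le> ennreal (2 * R * norm v) * EWs"
proof -
  let ?h = "\<lambda>y::real^'k. (min \<bar>v \<bullet> y\<bar> R)\<^sup>2"
  have L0: "0 \<le> 2 * R * norm v" using R by simp
  have Lh: "\<forall>a b. dist (?h a) (?h b) \<le> (2 * R * norm v) * dist a b"
    using trunc_lip[OF R] by blast
  have hm: "?h \<in> borel_measurable borel" using lip_meas[OF Lh L0] .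
  have hi: "integrable (P \<Otimes>\<^sub>M Q) (\<lambda>(x, g). ?h (f (act g x)))"
  proof (rule Bochner_Integration.integrable_bound[OF PQ.P.integrable_const[of "R\<^sup>2"]])
    show "(\<lambda>(x, g). ?h (f (act g x))) \<in> borel_measurable (P \<Otimes>\<^sub>M Q)"
      using measurable_compose[OF f_meas hm] by (simp add: comp_def case_prod_beta')
    have "?h y \<le> R\<^sup>2" for y by (rule power_mono) (use R in auto)
    then show "AE z in P \<Otimes>\<^sub>M Q. norm ((\<lambda>(x, g). ?h (f (act g x))) z) \<le> norm (R\<^sup>2)"
      by (intro AE_I2) (simp add: case_prod_beta')
  qed
  from avg_bound[OF L0 Lh hi] show ?thesis by (simp add: case_prod_beta')
qed

lemma trunc_eq:
  assumes EW0: "EWs = 0"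
  shows "integrable P (\<lambda>x. (v \<bullet> f x)\<^sup>2)"
    and "(\<integral>x. (v \<bullet> f x)\<^sup>2 \<partial>P) = (\<integral>z. (v \<bullet> (\<lambda>(x, g). f (act g x)) z)\<^sup>2 \<partial>(P \<Otimes>\<^sub>M Q))"
proof -
  define Y where "Y = (\<lambda>(x, g). f (act g x))"
  have Ym': "Y \<in> borel_measurable (P \<Otimes>\<^sub>M Q)" unfolding Y_def by (rule f_meas)
  define h where "h n t = (min \<bar>t\<bar> (real n))\<^sup>2" for n :: nat and t :: real
  have hmono: "h m t \<le> h n t" if "m \<le> n" for m n t
    unfolding h_def by (rule power_mono) (use that in auto)
  have hb: "\<bar>h n t\<bar> \<le> (real n)\<^sup>2" for n t
    unfolding h_def by (subst abs_of_nonneg) (auto intro: power_mono)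
  have hmeas: "(h n) \<in> borel_measurable borel" for n unfolding h_def by measurable
  have vfm: "(\<lambda>x. v \<bullet> f x) \<in> borel_measurable P" by measurable
  have vYm: "(\<lambda>z. v \<bullet> Y z) \<in> borel_measurable (P \<Otimes>\<^sub>M Q)" using Ym' by measurable
  have m1: "(\<lambda>x. h n (v \<bullet> f x)) \<in> borel_measurable P" for n
    using measurable_compose[OF vfm hmeas] by (simp add: comp_def)
  have m2: "(\<lambda>z. h n (v \<bullet> Y z)) \<in> borel_measurable (P \<Otimes>\<^sub>M Q)" for n
    using measurable_compose[OF vYm hmeas] by (simp add: comp_def)
  have i1: "integrable P (\<lambda>x. h n (v \<bullet> f x))" for n
    by (rule Bochner_Integration.integrable_bound[OF PQ.M1.integrable_const[of "(real n)\<^sup>2"] m1])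
       (use hb in \<open>auto intro!: AE_I2\<close>)
  have i2: "integrable (P \<Otimes>\<^sub>M Q) (\<lambda>z. h n (v \<bullet> Y z))" for n
    by (rule Bochner_Integration.integrable_bound[OF PQ.P.integrable_const[of "(real n)\<^sup>2"] m2])
       (use hb in \<open>auto intro!: AE_I2\<close>)
  have eqn: "(\<integral>z. h n (v \<bullet> Y z) \<partial>(P \<Otimes>\<^sub>M Q)) = (\<integral>x. h n (v \<bullet> f x) \<partial>P)" for n
  proof -
    have "ennreal \<bar>(\<integral>z. h n (v \<bullet> Y z) \<partial>(P \<Otimes>\<^sub>M Q)) - (\<integral>x. h n (v \<bullet> f x) \<partial>P)\<bar> \<le> 0"
      using avg_trunc[of "real n"] EW0 unfolding h_def Y_def by simp
    then show ?thesis by simp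
  qed
  have nn: "(\<integral>\<^sup>+x. ennreal (h n (v \<bullet> f x)) \<partial>P) = (\<integral>\<^sup>+z. ennreal (h n (v \<bullet> Y z)) \<partial>(P \<Otimes>\<^sub>M Q))" for n
    using nn_integral_eq_integral[OF i1[of n]] nn_integral_eq_integral[OF i2[of n]] eqn[of n]
    by (simp add: h_def)
  have inc1: "incseq (\<lambda>n x. ennreal (h n (v \<bullet> f x)))"
    by (auto simp: incseq_def le_fun_def intro!: ennreal_leI hmono)
  have inc2: "incseq (\<lambda>n z. ennreal (h n (v \<bullet> Y z)))"
    by (auto simp: incseq_def le_fun_def intro!: ennreal_leI hmono)
  have sup: "(SUP n. ennreal (h n t)) = ennreal (t\<^sup>2)" for t
    unfolding h_def by (rule sup_trunc)
  have "(\<integral>\<^sup>+x. ennreal ((v \<bullet> f x)\<^sup>2) \<partial>P) = (\<integral>\<^sup>+x. (SUP n. ennreal (h n (v \<bullet> f x))) \<partial>P)"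
    by (simp add: sup)
  also have "\<dots> = (SUP n. \<integral>\<^sup>+x. ennreal (h n (v \<bullet> f x)) \<partial>P)"
    by (rule nn_integral_monotone_convergence_SUP[OF inc1]) (use m1 in simp)
  also have "\<dots> = (SUP n. \<integral>\<^sup>+z. ennreal (h n (v \<bullet> Y z)) \<partial>(P \<Otimes>\<^sub>M Q))"
    by (simp add: nn)
  also have "\<dots> = (\<integral>\<^sup>+z. (SUP n. ennreal (h n (v \<bullet> Y z))) \<partial>(P \<Otimes>\<^sub>M Q))"
    by (rule nn_integral_monotone_convergence_SUP[OF inc2, symmetric]) (use m2 in simp)
  also have "\<dots> = (\<integral>\<^sup>+z. ennreal ((v \<bullet> Y z)\<^sup>2) \<partial>(P \<Otimes>\<^sub>M Q))"
    by (simp add: sup)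
  also have "\<dots> = ennreal (\<integral>z. (v \<bullet> Y z)\<^sup>2 \<partial>(P \<Otimes>\<^sub>M Q))"
    using nn_integral_eq_integral[OF vY_sq_int[of v]] unfolding Y_def by simp
  finally have key: "(\<integral>\<^sup>+x. ennreal ((v \<bullet> f x)\<^sup>2) \<partial>P) = ennreal (\<integral>z. (v \<bullet> Y z)\<^sup>2 \<partial>(P \<Otimes>\<^sub>M Q))" .
  show ip: "integrable P (\<lambda>x. (v \<bullet> f x)\<^sup>2)"
    by (rule integrableI_nonneg) (use key vfm in auto)
  have "ennreal (\<integral>x. (v \<bullet> f x)\<^sup>2 \<partial>P) = ennreal (\<integral>z. (v \<bullet> Y z)\<^sup>2 \<partial>(P \<Otimes>\<^sub>M Q))"
    using nn_integral_eq_integral[OF ip] key by simp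
  then show "(\<integral>x. (v \<bullet> f x)\<^sup>2 \<partial>P) = (\<integral>z. (v \<bullet> (\<lambda>(x, g). f (act g x)) z)\<^sup>2 \<partial>(P \<Otimes>\<^sub>M Q))"
    unfolding Y_def by (subst (asm) ennreal_inj) auto
qed

lemma L2P:
  assumes fin: "4 * sup_norm f * EWs \<noteq> \<infinity>"
  shows "integrable P (\<lambda>x. (norm (f x))\<^sup>2)"
proof (cases "sup_norm f = \<infinity>")
  case False
  show ?thesis
  proof (rule Bochner_Integration.integrable_bound[OF PQ.M1.integrable_const[of "(enn2real (sup_norm f))\<^sup>2"]])
    show "(\<lambda>x. (norm (f x))\<^sup>2) \<in> borel_measurable P" by measurable
    have "(norm (f x))\<^sup>2 \<le> (enn2real (sup_norm f))\<^sup>2" for x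
      by (rule power_mono[OF sup_bound[OF False]]) simp
    then show "AE x in P. norm ((norm (f x))\<^sup>2) \<le> norm ((enn2real (sup_norm f))\<^sup>2)"
      by (intro AE_I2) simp
  qed
next
  case True
  then have EW0: "EWs = 0" using fin
    by (auto simp: ennreal_mult_top ennreal_top_mult split: if_splits)
  have "integrable P (\<lambda>x. \<Sum>i\<in>UNIV. (axis i 1 \<bullet> f x)\<^sup>2)"
    by (intro Bochner_Integration.integrable_sum trunc_eq(1)[OF EW0])
  moreover have "(norm (f x))\<^sup>2 = (\<Sum>i\<in>UNIV. (axis i 1 \<bullet> f x)\<^sup>2)" for x
  proof -
    have ax: "axis i 1 \<bullet> w = w $ i" for i and w :: "real^'k" by (simp add: inner_axis')
    have "(norm w)\<^sup>2 = (\<Sum>i\<in>UNIV. (w $ i)\<^sup>2)" for w :: "real^'k"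
      unfolding power2_norm_eq_inner inner_vec_def by (simp add: power2_eq_square)
    then show ?thesis by (simp add: ax)
  qed
  ultimately show ?thesis by simp
qed

lemma qf_lin1: "v \<bullet> ((A - B + c *\<^sub>R mat 1) *v v) = v \<bullet> (A *v v) - v \<bullet> (B *v v) + c * (v \<bullet> v)"
  for A B :: "real^'k^'k"
  by (simp add: matrix_vector_mult_add_rdistrib matrix_vector_mult_diff_rdistrib
      scaleR_matrix_vector_assoc[symmetric] inner_add_right inner_diff_right)

lemma qf_lin2: "v \<bullet> ((c *\<^sub>R mat 1 - (A - B)) *v v) = c * (v \<bullet> v) - (v \<bullet> (A *v v) - v \<bullet> (B *v v))"
  for A B :: "real^'k^'k"
  by (simp add: matrix_vector_mult_add_rdistrib matrix_vector_mult_diff_rdistrib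
      scaleR_matrix_vector_assoc[symmetric] inner_add_right inner_diff_right)

lemma key_qf:
  assumes fin: "4 * sup_norm f * EWs \<noteq> \<infinity>"
  shows "\<bar>v \<bullet> (cov_mat (P \<Otimes>\<^sub>M Q) (\<lambda>(x, g). f (act g x)) *v v) - v \<bullet> (cov_mat P f *v v)\<bar>
          \<le> enn2real (4 * sup_norm f * EWs) * (v \<bullet> v)"
proof -
  have L2P': "integrable P (\<lambda>x. (norm (f x))\<^sup>2)" by (rule L2P[OF fin])
  define a where "a = (\<integral>z. v \<bullet> (\<lambda>(x, g). f (act g x)) z \<partial>(P \<Otimes>\<^sub>M Q))"
  define b where "b = (\<integral>x. v \<bullet> f x \<partial>P)"
  define TPQ where "TPQ = (\<integral>z. (v \<bullet> (\<lambda>(x, g). f (act g x)) z)\<^sup>2 \<partial>(P \<Otimes>\<^sub>M Q))"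
  define TP where "TP = (\<integral>x. (v \<bullet> f x)\<^sup>2 \<partial>P)"
  have qY: "v \<bullet> (cov_mat (P \<Otimes>\<^sub>M Q) (\<lambda>(x, g). f (act g x)) *v v) = TPQ - a\<^sup>2"
    unfolding TPQ_def a_def by (rule l2_qform[OF pqP f_meas L2PQ])
  have qP: "v \<bullet> (cov_mat P f *v v) = TP - b\<^sup>2"
    unfolding TP_def b_def by (rule l2_qform[OF P fm L2P'])
  have factA: "ennreal \<bar>a - b\<bar> \<le> ennreal (norm v) * EWs"
  proof -
    have Lh: "\<forall>x y. dist (v \<bullet> x) (v \<bullet> y) \<le> norm v * dist x y"
      using Cauchy_Schwarz_ineq2[of v] by (simp add: dist_real_def dist_norm inner_diff_right[symmetric])
    have hi: "integrable (P \<Otimes>\<^sub>M Q) (\<lambda>(x, g). v \<bullet> f (act g x))"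
      using integrable_inner_right[OF Y_int, of v] by (simp add: case_prod_beta')
    from avg_bound[OF norm_ge_zero Lh hi] show ?thesis
      unfolding a_def b_def by (simp add: case_prod_beta')
  qed
  show ?thesis
  proof (cases "sup_norm f = \<infinity>")
    case True
    then have EW0: "EWs = 0" using fin
      by (auto simp: ennreal_mult_top ennreal_top_mult split: if_splits)
    have "a = b" using factA EW0 by simp
    moreover have "TP = TPQ" unfolding TP_def TPQ_def by (rule trunc_eq(2)[OF EW0])
    ultimately show ?thesis using qY qP EW0 by simp
  next
    case False
    define Mr where "Mr = enn2real (sup_norm f)"
    define R where "R = Mr * norm v"
    have Mr0: "0 \<le> Mr" unfolding Mr_def by simp
    have R0: "0 \<le> R" unfolding R_def using Mr0 by simp
    have vb: "\<bar>v \<bullet> f y\<bar> \<le> R" for y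
    proof -
      have "\<bar>v \<bullet> f y\<bar> \<le> norm v * norm (f y)" by (rule Cauchy_Schwarz_ineq2)
      also have "\<dots> \<le> norm v * Mr" unfolding Mr_def by (rule mult_left_mono[OF sup_bound[OF False]]) simp
      finally show ?thesis unfolding R_def by (simp add: mult.commute)
    qed
    have vbz: "\<bar>v \<bullet> (\<lambda>(x, g). f (act g x)) z\<bar> \<le> R" for z
      using vb by (simp add: case_prod_beta')
    have eTPQ: "TPQ = (\<integral>z. (min \<bar>v \<bullet> (\<lambda>(x, g). f (act g x)) z\<bar> R)\<^sup>2 \<partial>(P \<Otimes>\<^sub>M Q))"
      unfolding TPQ_def by (rule Bochner_Integration.integral_cong) (use vbz in \<open>auto simp: min_def\<close>)
    have eTP: "TP = (\<integral>x. (min \<bar>v \<bullet> f x\<bar> R)\<^sup>2 \<partial>P)"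
      unfolding TP_def by (rule Bochner_Integration.integral_cong) (use vb in \<open>auto simp: min_def\<close>)
    have factB: "ennreal \<bar>TPQ - TP\<bar> \<le> ennreal (2 * R * norm v) * EWs"
      unfolding eTPQ eTP by (rule avg_trunc[OF R0])
    have ma: "(\<lambda>z. v \<bullet> (\<lambda>(x, g). f (act g x)) z) \<in> borel_measurable (P \<Otimes>\<^sub>M Q)"
      using f_meas by measurable
    have aR: "\<bar>a\<bar> \<le> R" unfolding a_def by (rule abs_integral_le_const[OF pqP ma vbz])
    have bR: "\<bar>b\<bar> \<le> R" unfolding b_def by (rule abs_integral_le_const[OF P _ vb]) measurable
    have split: "\<bar>(TPQ - a\<^sup>2) - (TP - b\<^sup>2)\<bar> \<le> \<bar>TPQ - TP\<bar> + \<bar>a - b\<bar> * (2 * R)"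
    proof -
      have "(TPQ - a\<^sup>2) - (TP - b\<^sup>2) = (TPQ - TP) - (a - b) * (a + b)"
        by (simp add: power2_eq_square algebra_simps)
      moreover have "\<bar>(a - b) * (a + b)\<bar> \<le> \<bar>a - b\<bar> * (2 * R)"
        unfolding abs_mult using aR bR by (intro mult_left_mono) auto
      ultimately show ?thesis by linarith
    qed
    have vv: "v \<bullet> v = (norm v)\<^sup>2" by (simp add: power2_norm_eq_inner)
    show ?thesis
    proof (cases "EWs = \<infinity>")
      case True
      then have "sup_norm f = 0" using fin
        by (auto simp: ennreal_mult_top ennreal_top_mult split: if_splits)
      then have R00: "R = 0" unfolding R_def Mr_def by simp
      have "TPQ = TP" using factB R00 True by simp
      moreover have "a = 0" "b = 0" using aR bR R00 by auto
      ultimately show ?thesis using qY qP by simp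
    next
      case False
      define e where "e = enn2real EWs"
      have e0: "0 \<le> e" unfolding e_def by simp
      have dT: "\<bar>TPQ - TP\<bar> \<le> 2 * R * norm v * e"
        unfolding e_def by (rule ennreal_bound_real[OF factB _ False]) (use R0 in simp)
      have dA: "\<bar>a - b\<bar> \<le> norm v * e"
        unfolding e_def by (rule ennreal_bound_real[OF factA _ False]) simp
      have "\<bar>a - b\<bar> * (2 * R) \<le> norm v * e * (2 * R)"
        by (rule mult_right_mono[OF dA]) (use R0 in simp)
      then have "\<bar>(TPQ - a\<^sup>2) - (TP - b\<^sup>2)\<bar> \<le> 4 * Mr * e * (norm v)\<^sup>2"
        using split dT unfolding R_def by (simp add: power2_eq_square algebra_simps)
      moreover have "enn2real (4 * sup_norm f * EWs) = 4 * Mr * e"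
        unfolding Mr_def e_def by (simp add: enn2real_mult)
      ultimately show ?thesis using qY qP vv by simp
    qed
  qed
qed

lemma part2_loewner:
  assumes fin: "4 * sup_norm f * EWs \<noteq> \<infinity>"
  shows "loewner_le (- (\<integral>x. cov_mat Q (\<lambda>g. f (act g x)) \<partial>P) - enn2real (4 * sup_norm f * EWs) *\<^sub>R mat 1)
                  (cov_mat P (orbit_avg Q act f) - cov_mat P f) \<and>
         loewner_le (cov_mat P (orbit_avg Q act f) - cov_mat P f)
                  (- (\<integral>x. cov_mat Q (\<lambda>g. f (act g x)) \<partial>P) + enn2real (4 * sup_norm f * EWs) *\<^sub>R mat 1)"
proof -
  define c where "c = enn2real (4 * sup_norm f * EWs)"
  define E where "E = (\<integral>x. cov_mat Q (\<lambda>g. f (act g x)) \<partial>P)"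
  define CY where "CY = cov_mat (P \<Otimes>\<^sub>M Q) (\<lambda>(x, g). f (act g x))"
  define CP where "CP = cov_mat P f"
  have id: "cov_mat P (orbit_avg Q act f) = CY - E" unfolding CY_def E_def by (rule part2_id)
  have k: "\<bar>v \<bullet> (CY *v v) - v \<bullet> (CP *v v)\<bar> \<le> c * (v \<bullet> v)" for v
    unfolding CY_def CP_def c_def by (rule key_qf[OF fin])
  have m1: "CY - E - CP - (- E - c *\<^sub>R mat 1) = CY - CP + c *\<^sub>R mat 1" by (simp add: algebra_simps)
  have m2: "- E + c *\<^sub>R mat 1 - (CY - E - CP) = c *\<^sub>R mat 1 - (CY - CP)" by (simp add: algebra_simps)
  have "loewner_le (- E - c *\<^sub>R mat 1) (CY - E - CP)"
    unfolding loewner_le_def m1 qf_lin1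
  proof (intro allI)
    fix v show "0 \<le> v \<bullet> (CY *v v) - v \<bullet> (CP *v v) + c * (v \<bullet> v)" using k[of v] by (simp add: abs_le_iff)
  qed
  moreover have "loewner_le (CY - E - CP) (- E + c *\<^sub>R mat 1)"
    unfolding loewner_le_def m2 qf_lin2
  proof (intro allI)
    fix v show "0 \<le> c * (v \<bullet> v) - (v \<bullet> (CY *v v) - v \<bullet> (CP *v v))" using k[of v] by (simp add: abs_le_iff)
  qed
  ultimately show ?thesis unfolding id c_def[symmetric] E_def[symmetric] CP_def[symmetric] by simp
qed

end

theorem lemma6p2:
  fixes P :: "'x measure" and Q :: "'g::topological_group_add measure"
    and act :: "'g \<Rightarrow> 'x \<Rightarrow> 'x" and f :: "'x \<Rightarrow> real^'k"
  assumes P: "prob_space P"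
    and compact_G: "compact (UNIV :: 'g set)"
    and Haar: "haar_prob Q"
    and act_id: "\<And>x. act 0 x = x"
    and act_comp: "\<And>g h x. act (g + h) x = act g (act h x)"
    and f_meas: "(\<lambda>(x, g). f (act g x)) \<in> borel_measurable (P \<Otimes>\<^sub>M Q)"
    and f_L2: "integrable (P \<Otimes>\<^sub>M Q) (\<lambda>(x, g). (norm (f (act g x)))\<^sup>2)"
  defines "EW \<equiv> \<integral>\<^sup>+ g. wasserstein1 (distr P borel (\<lambda>x. f (act g x))) (distr P borel f) \<partial>Q"
  shows
    "ennreal (norm ((\<integral>x. orbit_avg Q act f x \<partial>P) - (\<integral>x. f x \<partial>P))) \<le> EW
     \<and> cov_mat P (orbit_avg Q act f) =
       cov_mat (P \<Otimes>\<^sub>M Q) (\<lambda>(x, g). f (act g x)) - (\<integral>x. cov_mat Q (\<lambda>g. f (act g x)) \<partial>P)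
     \<and> (4 * sup_norm f * EW \<noteq> \<infinity> \<longrightarrow>
       loewner_le (- (\<integral>x. cov_mat Q (\<lambda>g. f (act g x)) \<partial>P) - enn2real (4 * sup_norm f * EW) *\<^sub>R mat 1)
                  (cov_mat P (orbit_avg Q act f) - cov_mat P f) \<and>
       loewner_le (cov_mat P (orbit_avg Q act f) - cov_mat P f)
                  (- (\<integral>x. cov_mat Q (\<lambda>g. f (act g x)) \<partial>P) + enn2real (4 * sup_norm f * EW) *\<^sub>R mat 1))
     \<and> (\<forall>\<phi> :: real^'k \<Rightarrow> real. convex_on UNIV \<phi> \<longrightarrow> lip_const \<phi> \<noteq> \<infinity> \<longrightarrow>
       ennreal \<bar>(\<integral>x. \<phi> (orbit_avg Q act f x) \<partial>P) - (\<integral>x. \<phi> (f x) \<partial>P)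
               - ((\<integral>x. \<phi> (orbit_avg Q act f x) \<partial>P) - (\<integral>x. orbit_avg Q act (\<lambda>y. \<phi> (f y)) x \<partial>P))\<bar>
       \<le> lip_const \<phi> * EW)"
proof -
  interpret S: setting P Q act f
    using P Haar act_id f_meas f_L2 unfolding setting_def haar_prob_def by auto
  show ?thesis
    unfolding EW_def using S.part1 S.part2_id S.part2_loewner S.part3 by blast
qed

end
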